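(* Let $\lambda$ be a partition with $d$ distinct part sizes and parameters $(h_1,\dots,h_d)$, $(v_1,\dots,v_d)$. Writing $[i,j]^+=[i+1,j-1]$ and $[i,j]^-=[i-1,j+1]$, we have for $0\le s\le d$ and $1\le r\le d$: \[ \alpha_s=\prod_{i=1}^s\frac{[h_{i,s},v_{i+1,s}]}{[h_{i,s},v_{i,s}]}\prod_{i=s+1}^d\frac{[h_{s+1,i-1},v_{s+1,i}]}{[h_{s+1,i},v_{s+1,i}]},\qquad \overline{\alpha}_s=\prod_{i=1}^s\frac{[h_{i,s},v_{i+1,s}]^-}{[h_{i,s},v_{i,s}]^-}\prod_{i=s+1}^d\frac{[h_{s+1,i-1},v_{s+1,i}]^+}{[h_{s+1,i},v_{s+1,i}]^+}, \] \[ \beta_r=\prod_{i=1}^{r-1}\frac{[h_{i,r-1},v_{i,r}]^+}{[h_{i,r-1},v_{i+1,r}]^+}\cdot\frac{[0,v_r]^+}{[0,1]^+}\frac{[h_r,0]^-}{[1,0]^-}\cdot\prod_{i=r+1}^d\frac{[h_{r,i},v_{r+1,i}]^-}{[h_{r,i-1},v_{r+1,i}]^-}, \] \[ \overline{\beta}_r=\prod_{i=1}^{r-1}\frac{[h_{i,r-1},v_{i,r}]}{[h_{i,r-1},v_{i+1,r}]}\cdot\frac{[0,v_r]}{[0,1]}\frac{[h_r,0]}{[1,0]}\cdot\prod_{i=r+1}^d\frac{[h_{r,i},v_{r+1,i}]}{[h_{r,i-1},v_{r+1,i}]}, \] \[ \gamma_{r,s}=\begin{cases}\gamma'_{r,s}&\text{if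 }0<r\le s,\\ \gamma'_{r,s}\,q^{-1-2h_{s+1,r-1}}t^{1-2v_{s+1,r}}&\text{if }r>s,\end{cases}\qquad \gamma'_{r,s}=\begin{cases}\dfrac{[h_{r,s},v_{r+1,s}]\,[h_{r,s},v_{r+1,s}]^-}{[0,1][1,0]}&\text{if }0<r\le s,\\[2mm] \dfrac{[h_{s+1,r-1},v_{s+1,r}]\,[h_{s+1,r-1},v_{s+1,r}]^+}{[0,1][1,0]}&\text{if }r>s.\end{cases} \] Consequently, \[ p_{r,s}=\begin{cases}t^{v_{1,s}}\alpha_s&r=0,\\ \tau_{r,s}\dfrac{\alpha_s\beta_r}{\gamma'_{r,s}}&r>0,\end{cases}\qquad \overline{p}_{r,s}=\begin{cases}t^{v_{1,s}}\overline{\alpha}_s&r=0,\\ \tau_{r,s}\dfrac{\overline{\alpha}_s\overline{\beta}_r}{\gamma'_{r,s}}&r>0,\end{cases} \] where $\tau_{r,s}=t^{v_{r+1,s}}$ if $0<r\le s$ and $\tau_{r,s}=q^{1+2h_{s+1,r-1}}t^{-1+v_{s+1,r}}$ if $r>s$.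
   Context: Partitions are Young diagrams in French convention (cells $(x,y)\in\mathbb{Z}_{>0}^2$, $x\le\lambda_y$), $\lambda'$ the conjugate; for $c=(x,y)\in\lambda$, $a_\lambda(c)=\lambda_y-x$, $\ell_\lambda(c)=\lambda'_x-y$; $n(\kappa)=\sum_{c\in\kappa}\ell_\kappa(c)$, $n'(\kappa)=\sum_{c\in\kappa}a_\kappa(c)$, $n(\rho/\kappa)=n(\rho)-n(\kappa)$, $n'(\rho/\kappa)=n'(\rho)-n'(\kappa)$. For $\kappa\subseteq\rho$, $\mathcal{R}_{\rho/\kappa}$ (resp. $\mathcal{C}_{\rho/\kappa}$): cells of $\kappa$ in a row (resp. column) containing a cell of $\rho/\kappa$. $[i,j]=1-q^it^j$. For $\kappa\lessdot\rho$ (one-cell difference): $\alpha_{\rho/\kappa}=\prod_{c\in\mathcal{R}_{\rho/\kappa}}\frac{[a_\kappa(c),\ell_\kappa(c)+1]}{[a_\rho(c),\ell_\rho(c)+1]}\prod_{c\in\mathcal{C}_{\rho/\kappa}}\frac{[a_\kappa(c)+1,\ell_\kappa(c)]}{[a_\rho(c)+1,\ell_\rho(c)]}$, $\overline{\alpha}_{\rho/\kappa}=\prod_{c\in\mathcal{R}_{\rho/\kappa}}\frac{[a_\kappa(c)+1,\ell_\kappa(c)]}{[a_\rho(c)+1,\ell_\rho(c)]}\prod_{c\in\mathcal{C}_{\rho/\kappa}}\frac{[a_\kappa(c),\ell_\kappa(c)+1]}{[a_\rho(c),\ell_\rho(c)+1]}$, $\beta=1/\alpha$, $\overline{\beta}=1/\overline{\alpha}$.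 For $\mu\lessdot\lambda\lessdot\nu$, with $A=n'(\lambda/\mu)-n'(\nu/\lambda)$, $B=n(\nu/\lambda)-n(\lambda/\mu)$: $\gamma_{\nu/\lambda/\mu}=\frac{(1-q^At^B)(1-q^{A+1}t^{B-1})}{(1-q)(1-t)}$. Probabilities: $\mathcal{P}_\lambda(\lambda\rightarrow\nu)=t^{n(\nu/\lambda)}\alpha_{\nu/\lambda}$, $\overline{\mathcal{P}}_\lambda(\lambda\leftarrow\nu)=t^{n(\nu/\lambda)}\overline{\alpha}_{\nu/\lambda}$, and for $\mu\lessdot\lambda$: $\mathcal{P}_\lambda(\mu\rightarrow\nu)=t^{B-1}\alpha_{\nu/\lambda}\beta_{\lambda/\mu}/\gamma_{\nu/\lambda/\mu}$, $\overline{\mathcal{P}}_\lambda(\mu\leftarrow\nu)=t^{B-1}\overline{\alpha}_{\nu/\lambda}\overline{\beta}_{\lambda/\mu}/\gamma_{\nu/\lambda/\mu}$. Parameters: if $\lambda$ has distinct part sizes $u_1>\dots>u_d>0$, let $v_i$ be the multiplicity of $u_i$ and $h_i=u_i-u_{i+1}$ ($u_{d+1}=0$). Set $h_{i,j}=h_i+\dots+h_j$, $v_{i,j}=v_i+\dots+v_j$ for $i\le j$ and $h_{i,j}=v_{i,j}=0$ for $i>j$. For $0\le s\le d$, $\lambda^{(+s)}$ is obtained from $\lambda$ by adding a cell in row $v_{1,s}+1$; $\lambda^{(-0)}=\lambda$, and for $1\le r\le d$, $\lambda^{(-r)}$ is obtained by removing a cell from row $v_{1,r}$. Define $\alpha_s=\alpha_{\lambda^{(+s)}/\lambda}$,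 $\overline{\alpha}_s=\overline{\alpha}_{\lambda^{(+s)}/\lambda}$, $\beta_r=\beta_{\lambda/\lambda^{(-r)}}$, $\overline{\beta}_r=\overline{\beta}_{\lambda/\lambda^{(-r)}}$, $\gamma_{r,s}=\gamma_{\lambda^{(+s)}/\lambda/\lambda^{(-r)}}$, $p_{r,s}=\mathcal{P}_\lambda(\lambda^{(-r)}\rightarrow\lambda^{(+s)})$, $\overline{p}_{r,s}=\overline{\mathcal{P}}_\lambda(\lambda^{(-r)}\leftarrow\lambda^{(+s)})$. *)

theory Defs
  imports Main
begin

section \<open>Partitions as weakly decreasing lists of positive parts (French convention)\<close>

definition row :: "nat list \<Rightarrow> nat \<Rightarrow> nat" where
  "row lam y = (if 1 \<le> y \<and> y \<le> length lam then lam ! (y - 1) else 0)"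

definition is_partition :: "nat list \<Rightarrow> bool" where
  "is_partition lam \<longleftrightarrow> sorted_wrt (\<ge>) lam \<and> (\<forall>x\<in>set lam. 0 < x)"

definition cells :: "nat list \<Rightarrow> (nat \<times> nat) set" where
  "cells lam = {(x, y). 1 \<le> y \<and> 1 \<le> x \<and> x \<le> row lam y}"

definition conjugate :: "nat list \<Rightarrow> nat \<Rightarrow> nat" where
  "conjugate lam x = card {y. 1 \<le> y \<and> x \<le> row lam y}"

definition arm :: "nat list \<Rightarrow> nat \<times> nat \<Rightarrow> nat" where
  "arm lam c = row lam (snd c) - fst c"

definition leg :: "nat list \<Rightarrow> nat \<times> nat \<Rightarrow> nat" where
  "leg lam c = conjugate lam (fst c) - snd c"

definition nn :: "nat list \<Rightarrow> nat" where
  "nn lam = (\<Sum>c\<in>cells lam. leg lam c)"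

definition nn' :: "nat list \<Rightarrow> nat" where
  "nn' lam = (\<Sum>c\<in>cells lam. arm lam c)"

definition rowsR :: "nat list \<Rightarrow> nat list \<Rightarrow> (nat \<times> nat) set" where
  "rowsR rho kap = {c \<in> cells kap. \<exists>c'\<in>cells rho - cells kap. snd c' = snd c}"

definition colsC :: "nat list \<Rightarrow> nat list \<Rightarrow> (nat \<times> nat) set" where
  "colsC rho kap = {c \<in> cells kap. \<exists>c'\<in>cells rho - cells kap. fst c' = fst c}"

definition br :: "'a::field \<Rightarrow> 'a \<Rightarrow> int \<Rightarrow> int \<Rightarrow> 'a" where
  "br q t i j = 1 - q powi i * t powi j"

definition brp :: "'a::field \<Rightarrow> 'a \<Rightarrow> int \<Rightarrow> int \<Rightarrow> 'a" where
  "brp q t i j = br q t (i + 1) (j - 1)"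

definition brm :: "'a::field \<Rightarrow> 'a \<Rightarrow> int \<Rightarrow> int \<Rightarrow> 'a" where
  "brm q t i j = br q t (i - 1) (j + 1)"

definition alpha :: "'a::field \<Rightarrow> 'a \<Rightarrow> nat list \<Rightarrow> nat list \<Rightarrow> 'a" where
  "alpha q t rho kap =
     (\<Prod>c\<in>rowsR rho kap. br q t (int (arm kap c)) (int (leg kap c) + 1)
                        / br q t (int (arm rho c)) (int (leg rho c) + 1)) *
     (\<Prod>c\<in>colsC rho kap. br q t (int (arm kap c) + 1) (int (leg kap c))
                        / br q t (int (arm rho c) + 1) (int (leg rho c)))"

definition alphabar :: "'a::field \<Rightarrow> 'a \<Rightarrow> nat list \<Rightarrow> nat list \<Rightarrow> 'a" where
  "alphabar q t rho kap =
     (\<Prod>c\<in>rowsR rho kap. br q t (int (arm kap c) + 1) (int (leg kap c))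
                        / br q t (int (arm rho c) + 1) (int (leg rho c))) *
     (\<Prod>c\<in>colsC rho kap. br q t (int (arm kap c)) (int (leg kap c) + 1)
                        / br q t (int (arm rho c)) (int (leg rho c) + 1))"

definition beta :: "'a::field \<Rightarrow> 'a \<Rightarrow> nat list \<Rightarrow> nat list \<Rightarrow> 'a" where
  "beta q t rho kap = 1 / alpha q t rho kap"

definition betabar :: "'a::field \<Rightarrow> 'a \<Rightarrow> nat list \<Rightarrow> nat list \<Rightarrow> 'a" where
  "betabar q t rho kap = 1 / alphabar q t rho kap"

text \<open>For mu <. lam <. nu: A = n'(lam/mu) - n'(nu/lam), B = n(nu/lam) - n(lam/mu).\<close>
definition gA :: "nat list \<Rightarrow> nat list \<Rightarrow> nat list \<Rightarrow> int" where
  "gA nu lam mu = (int (nn' lam) - int (nn' mu)) - (int (nn' nu) - int (nn' lam))"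

definition gB :: "nat list \<Rightarrow> nat list \<Rightarrow> nat list \<Rightarrow> int" where
  "gB nu lam mu = (int (nn nu) - int (nn lam)) - (int (nn lam) - int (nn mu))"

definition gamma :: "'a::field \<Rightarrow> 'a \<Rightarrow> nat list \<Rightarrow> nat list \<Rightarrow> nat list \<Rightarrow> 'a" where
  "gamma q t nu lam mu =
     (1 - q powi gA nu lam mu * t powi gB nu lam mu) *
     (1 - q powi (gA nu lam mu + 1) * t powi (gB nu lam mu - 1)) / ((1 - q) * (1 - t))"

definition Pup0 :: "'a::field \<Rightarrow> 'a \<Rightarrow> nat list \<Rightarrow> nat list \<Rightarrow> 'a" where
  "Pup0 q t lam nu = t powi (int (nn nu) - int (nn lam)) * alpha q t nu lam"

definition Pbar0 :: "'a::field \<Rightarrow> 'a \<Rightarrow> nat list \<Rightarrow> nat list \<Rightarrow> 'a" where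
  "Pbar0 q t lam nu = t powi (int (nn nu) - int (nn lam)) * alphabar q t nu lam"

definition Pup :: "'a::field \<Rightarrow> 'a \<Rightarrow> nat list \<Rightarrow> nat list \<Rightarrow> nat list \<Rightarrow> 'a" where
  "Pup q t lam mu nu =
     t powi (gB nu lam mu - 1) * alpha q t nu lam * beta q t lam mu / gamma q t nu lam mu"

definition Pbar :: "'a::field \<Rightarrow> 'a \<Rightarrow> nat list \<Rightarrow> nat list \<Rightarrow> nat list \<Rightarrow> 'a" where
  "Pbar q t lam mu nu =
     t powi (gB nu lam mu - 1) * alphabar q t nu lam * betabar q t lam mu / gamma q t nu lam mu"

text \<open>Distinct part sizes u_1 > ... > u_d > 0, with u_{d+1} = 0.\<close>
definition nd :: "nat list \<Rightarrow> nat" where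
  "nd lam = card (set lam)"

definition uu :: "nat list \<Rightarrow> nat \<Rightarrow> nat" where
  "uu lam i = (if 1 \<le> i \<and> i \<le> nd lam then rev (sorted_list_of_set (set lam)) ! (i - 1) else 0)"

definition vv :: "nat list \<Rightarrow> nat \<Rightarrow> nat" where
  "vv lam i = (if 1 \<le> i \<and> i \<le> nd lam then count_list lam (uu lam i) else 0)"

definition hh :: "nat list \<Rightarrow> nat \<Rightarrow> nat" where
  "hh lam i = (if 1 \<le> i \<and> i \<le> nd lam then uu lam i - uu lam (i + 1) else 0)"

text \<open>h_{i,j} and v_{i,j} (zero when i > j).\<close>
definition hs :: "nat list \<Rightarrow> nat \<Rightarrow> nat \<Rightarrow> nat" where
  "hs lam i j = (\<Sum>k=i..j. hh lam k)"

definition vs :: "nat list \<Rightarrow> nat \<Rightarrow> nat \<Rightarrow> nat" where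
  "vs lam i j = (\<Sum>k=i..j. vv lam k)"

definition hsi :: "nat list \<Rightarrow> nat \<Rightarrow> nat \<Rightarrow> int" where "hsi lam i j = int (hs lam i j)"
definition vsi :: "nat list \<Rightarrow> nat \<Rightarrow> nat \<Rightarrow> int" where "vsi lam i j = int (vs lam i j)"
definition hhi :: "nat list \<Rightarrow> nat \<Rightarrow> int" where "hhi lam i = int (hh lam i)"

definition add_cell :: "nat list \<Rightarrow> nat \<Rightarrow> nat list" where
  "add_cell lam y = (if y \<le> length lam then lam[y - 1 := lam ! (y - 1) + 1] else lam @ [1])"

definition rem_cell :: "nat list \<Rightarrow> nat \<Rightarrow> nat list" where
  "rem_cell lam y = filter (\<lambda>x. 0 < x) (lam[y - 1 := lam ! (y - 1) - 1])"

definition lplus :: "nat list \<Rightarrow> nat \<Rightarrow> nat list" where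
  "lplus lam s = add_cell lam (vs lam 1 s + 1)"

definition lminus :: "nat list \<Rightarrow> nat \<Rightarrow> nat list" where
  "lminus lam r = (if r = 0 then lam else rem_cell lam (vs lam 1 r))"

definition alpha_s where "alpha_s q t lam s = alpha q t (lplus lam s) lam"
definition alphabar_s where "alphabar_s q t lam s = alphabar q t (lplus lam s) lam"
definition beta_r where "beta_r q t lam r = beta q t lam (lminus lam r)"
definition betabar_r where "betabar_r q t lam r = betabar q t lam (lminus lam r)"
definition gamma_rs where "gamma_rs q t lam r s = gamma q t (lplus lam s) lam (lminus lam r)"

definition p_rs :: "'a::field \<Rightarrow> 'a \<Rightarrow> nat list \<Rightarrow> nat \<Rightarrow> nat \<Rightarrow> 'a" where
  "p_rs q t lam r s =
     (if r = 0 then Pup0 q t lam (lplus lam s) else Pup q t lam (lminus lam r) (lplus lam s))"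

definition pbar_rs :: "'a::field \<Rightarrow> 'a \<Rightarrow> nat list \<Rightarrow> nat \<Rightarrow> nat \<Rightarrow> 'a" where
  "pbar_rs q t lam r s =
     (if r = 0 then Pbar0 q t lam (lplus lam s) else Pbar q t lam (lminus lam r) (lplus lam s))"

definition gammap :: "'a::field \<Rightarrow> 'a \<Rightarrow> nat list \<Rightarrow> nat \<Rightarrow> nat \<Rightarrow> 'a" where
  "gammap q t lam r s =
     (if 0 < r \<and> r \<le> s then
        br q t (hsi lam r s) (vsi lam (r + 1) s) * brm q t (hsi lam r s) (vsi lam (r + 1) s)
          / (br q t 0 1 * br q t 1 0)
      else
        br q t (hsi lam (s + 1) (r - 1)) (vsi lam (s + 1) r)
          * brp q t (hsi lam (s + 1) (r - 1)) (vsi lam (s + 1) r)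
          / (br q t 0 1 * br q t 1 0))"

definition tau :: "'a::field \<Rightarrow> 'a \<Rightarrow> nat list \<Rightarrow> nat \<Rightarrow> nat \<Rightarrow> 'a" where
  "tau q t lam r s =
     (if 0 < r \<and> r \<le> s then t powi (vsi lam (r + 1) s)
      else q powi (1 + 2 * (hsi lam (s + 1) (r - 1))) * t powi (-1 + (vsi lam (s + 1) r)))"

end

theory Submission
  imports Defs
begin



lemma cells_finite: "finite (cells kap)"
proof -
  have "cells kap \<subseteq> {..sum_list kap} \<times> {..length kap}"
  proof
    fix c assume "c \<in> cells kap"
    then obtain x y where c: "c = (x,y)" "1 \<le> y" "1 \<le> x" "x \<le> row kap y" by (auto simp: cells_def)
    then have "y \<le> length kap" by (auto simp: row_def split: if_splits)
    moreover have "row kap y \<le> sum_list kap" using c \<open>y \<le> length kap\<close>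
      by (auto simp: row_def intro!: member_le_sum_list)
    ultimately show "c \<in> {..sum_list kap} \<times> {..length kap}" using c by auto
  qed
  then show ?thesis by (rule finite_subset) auto
qed

definition gal :: "(nat \<Rightarrow> nat \<Rightarrow> 'a::field) \<Rightarrow> (nat \<Rightarrow> nat \<Rightarrow> 'a) \<Rightarrow> nat list \<Rightarrow> nat list \<Rightarrow> 'a" where
 "gal F G rho kap = (\<Prod>c\<in>rowsR rho kap. F (arm kap c) (leg kap c) / F (arm rho c) (leg rho c)) *
    (\<Prod>c\<in>colsC rho kap. G (arm kap c) (leg kap c) / G (arm rho c) (leg rho c))"

locale onecell =
  fixes kap rho :: "nat list" and x0 y0 :: nat
  assumes rowrel: "\<And>y. row rho y = row kap y + (if y = y0 then 1 else 0)"
  and y0: "1 \<le> y0" and x0: "x0 = row kap y0 + 1"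
  and shape: "\<And>y. 1 \<le> y \<Longrightarrow> x0 \<le> row kap y \<longleftrightarrow> y < y0"
begin

lemma conj_kap_x0: "conjugate kap x0 = y0 - 1"
proof -
  have "{y. 1 \<le> y \<and> x0 \<le> row kap y} = {1..<y0}" using shape by auto
  then show ?thesis by (simp add: conjugate_def)
qed

lemma conj_rho_x0: "conjugate rho x0 = y0"
proof -
  have "{y. 1 \<le> y \<and> x0 \<le> row rho y} = {1..y0}" using shape rowrel x0 y0
    by (auto simp: le_Suc_eq)
  then show ?thesis by (simp add: conjugate_def)
qed

lemma conj_other: "x \<noteq> x0 \<Longrightarrow> conjugate rho x = conjugate kap x"
proof -
  assume "x \<noteq> x0"
  then have "{y. 1 \<le> y \<and> x \<le> row rho y} = {y. 1 \<le> y \<and> x \<le> row kap y}" using rowrel x0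
    by (auto split: if_splits)
  then show ?thesis by (simp add: conjugate_def)
qed

lemma cells_rho: "cells rho = insert (x0,y0) (cells kap)" and new_notin: "(x0,y0) \<notin> cells kap"
  using rowrel x0 y0 by (auto simp: cells_def split: if_splits)

lemma cells_diff: "cells rho - cells kap = {(x0,y0)}"
  using cells_rho new_notin by auto

lemma rowsR_eq: "rowsR rho kap = (\<lambda>x. (x,y0)) ` {0<..x0-1}"
  unfolding rowsR_def cells_diff using x0 y0 by (auto simp: cells_def)

lemma colsC_eq: "colsC rho kap = (\<lambda>y. (x0,y)) ` {0<..y0-1}"
  unfolding colsC_def cells_diff using shape y0 x0 by (auto simp: cells_def)

lemma leg_rho: "c \<in> cells kap \<Longrightarrow> leg rho c = leg kap c + (if fst c = x0 then 1 else 0)"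
proof -
  assume c: "c \<in> cells kap"
  obtain x y where xy: "c = (x,y)" by force
  show ?thesis
  proof (cases "x = x0")
    case True
    then have "y < y0" using c xy shape by (auto simp: cells_def)
    then show ?thesis using True xy conj_rho_x0 conj_kap_x0 by (simp add: leg_def)
  qed (simp add: xy leg_def conj_other)
qed

lemma arm_rho: "c \<in> cells kap \<Longrightarrow> arm rho c = arm kap c + (if snd c = y0 then 1 else 0)"
  using rowrel x0 by (auto simp: arm_def cells_def)

lemma ind_sum: "finite A \<Longrightarrow> (\<Sum>c\<in>A. (if P c then 1 else 0::nat)) = card {c\<in>A. P c}"
  by (simp add: sum.If_cases Int_def conj_commute)

lemma nn_rho: "nn rho = nn kap + (y0 - 1)"
proof -
  have "nn rho = leg rho (x0,y0) + (\<Sum>c\<in>cells kap. leg rho c)"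
    unfolding nn_def cells_rho using cells_finite new_notin by simp
  also have "leg rho (x0,y0) = 0" using conj_rho_x0 by (simp add: leg_def)
  also have "(\<Sum>c\<in>cells kap. leg rho c) = (\<Sum>c\<in>cells kap. leg kap c + (if fst c = x0 then 1 else 0))"
    by (rule sum.cong) (auto simp: leg_rho)
  also have "\<dots> = nn kap + card {c\<in>cells kap. fst c = x0}"
    by (simp add: sum.distrib nn_def ind_sum cells_finite)
  also have "{c\<in>cells kap. fst c = x0} = colsC rho kap"
    unfolding colsC_def cells_diff by auto
  also have "card \<dots> = y0 - 1" unfolding colsC_eq by (simp add: card_image inj_on_def)
  finally show ?thesis by simp
qed

lemma nn'_rho: "nn' rho = nn' kap + (x0 - 1)"
proof -
  have "nn' rho = arm rho (x0,y0) + (\<Sum>c\<in>cells kap. arm rho c)"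
    unfolding nn'_def cells_rho using cells_finite new_notin by simp
  also have "arm rho (x0,y0) = 0" using rowrel x0 by (simp add: arm_def)
  also have "(\<Sum>c\<in>cells kap. arm rho c) = (\<Sum>c\<in>cells kap. arm kap c + (if snd c = y0 then 1 else 0))"
    by (rule sum.cong) (auto simp: arm_rho)
  also have "\<dots> = nn' kap + card {c\<in>cells kap. snd c = y0}"
    by (simp add: sum.distrib nn'_def ind_sum cells_finite)
  also have "{c\<in>cells kap. snd c = y0} = rowsR rho kap"
    unfolding rowsR_def cells_diff by auto
  also have "card \<dots> = x0 - 1" unfolding rowsR_eq by (simp add: card_image inj_on_def)
  finally show ?thesis by simp
qed

lemma gal_eq: "gal F G rho kap =
  (\<Prod>x\<in>{0<..x0-1}. F (x0-1-x) (conjugate kap x - y0) / F (x0-1-x+1) (conjugate kap x - y0)) *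
  (\<Prod>y\<in>{0<..y0-1}. G (row kap y - x0) (y0-1-y) / G (row kap y - x0) (y0-1-y+1))"
proof -
  have 1: "(\<Prod>c\<in>rowsR rho kap. F (arm kap c) (leg kap c) / F (arm rho c) (leg rho c)) =
     (\<Prod>x\<in>{0<..x0-1}. F (x0-1-x) (conjugate kap x - y0) / F (x0-1-x+1) (conjugate kap x - y0))"
    unfolding rowsR_eq
    apply (subst prod.reindex, simp add: inj_on_def)
    apply (rule prod.cong, simp)
    using rowrel x0 by (auto simp: arm_def leg_def conj_other Suc_diff_le)
  have 2: "(\<Prod>c\<in>colsC rho kap. G (arm kap c) (leg kap c) / G (arm rho c) (leg rho c)) =
     (\<Prod>y\<in>{0<..y0-1}. G (row kap y - x0) (y0-1-y) / G (row kap y - x0) (y0-1-y+1))"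
    unfolding colsC_eq
    apply (subst prod.reindex, simp add: inj_on_def)
    apply (rule prod.cong, simp)
    using rowrel x0 conj_rho_x0 conj_kap_x0 by (auto simp: arm_def leg_def Suc_diff_Suc)
  show ?thesis unfolding gal_def 1 2 ..
qed

end



lemma telescope:
  fixes f :: "nat \<Rightarrow> 'a::field"
  assumes nz: "\<And>n. f n \<noteq> 0" and "lo \<le> hi" "hi \<le> c"
  shows "(\<Prod>x\<in>{lo<..hi}. f (c-x) / f (c-x+1)) = f (c-hi) / f (c-lo)"
  using assms(2,3)
proof (induction hi)
  case 0 then show ?case using nz by simp
next
  case (Suc hi)
  show ?case
  proof (cases "lo = Suc hi")
    case True then show ?thesis using nz by simp
  next
    case False
    then have le: "lo \<le> hi" using Suc.prems by simp
    have ins: "{lo<..Suc hi} = insert (Suc hi) {lo<..hi}" using le by auto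
    have "(\<Prod>x\<in>{lo<..Suc hi}. f (c-x) / f (c-x+1)) = f (c - Suc hi) / f (c - Suc hi + 1) * (\<Prod>x\<in>{lo<..hi}. f (c-x) / f (c-x+1))"
      unfolding ins by simp
    also have "(\<Prod>x\<in>{lo<..hi}. f (c-x) / f (c-x+1)) = f (c-hi) / f (c-lo)"
      using Suc.IH le Suc.prems by simp
    also have "c - Suc hi + 1 = c - hi" using Suc.prems by simp
    finally show ?thesis using nz by simp
  qed
qed

lemma blocks_anti:
  assumes "\<And>i. j \<le> i \<Longrightarrow> i < j + n \<Longrightarrow> U (Suc i) \<le> (U i :: nat)"
  shows "(\<Prod>x\<in>{U (j+n)<..U j}. g x) = (\<Prod>i\<in>{j..<j+n}. \<Prod>x\<in>{U (Suc i)<..U i}. (g x :: 'a::comm_monoid_mult))"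
  using assms
proof (induction n)
  case 0 then show ?case by simp
next
  case (Suc n)
  note pr = Suc.prems
  have mono: "U (j+n) \<le> U j"
  proof -
    have "\<forall>m\<le>n. U (j+m) \<le> U j"
    proof (intro allI impI)
      fix m assume "m \<le> n" then show "U (j+m) \<le> U j"
      proof (induction m)
        case (Suc m)
        then show ?case using pr[of "j+m"] by force
      qed simp
    qed
    then show ?thesis by simp
  qed
  have "{U (j + Suc n)<..U j} = {U (Suc (j+n))<..U (j+n)} \<union> {U (j+n)<..U j}"
    using Suc.prems[of "j+n"] mono by auto
  then have "(\<Prod>x\<in>{U (j+Suc n)<..U j}. g x) = (\<Prod>x\<in>{U (Suc (j+n))<..U (j+n)}. g x) * (\<Prod>x\<in>{U (j+n)<..U j}. g x)"
    by (simp add: prod.union_disjoint ivl_disj_int)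
  also have "(\<Prod>x\<in>{U (j+n)<..U j}. g x) = (\<Prod>i\<in>{j..<j+n}. \<Prod>x\<in>{U (Suc i)<..U i}. g x)"
    using Suc by simp
  finally show ?case by (simp add: mult.commute)
qed

lemma blocks_mono:
  assumes "\<And>i. j \<le> i \<Longrightarrow> i < j + n \<Longrightarrow> W i \<le> (W (Suc i) :: nat)"
  shows "(\<Prod>y\<in>{W j<..W (j+n)}. g y) = (\<Prod>i\<in>{Suc j..j+n}. \<Prod>y\<in>{W (i-1)<..W i}. (g y :: 'a::comm_monoid_mult))"
  using assms
proof (induction n)
  case 0 then show ?case by simp
next
  case (Suc n)
  note pr = Suc.prems
  have mono: "W j \<le> W (j+n)"
  proof -
    have "\<forall>m\<le>n. W j \<le> W (j+m)"
    proof (intro allI impI)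
      fix m assume "m \<le> n" then show "W j \<le> W (j+m)"
      proof (induction m)
        case (Suc m)
        then show ?case using pr[of "j+m"] by force
      qed simp
    qed
    then show ?thesis by simp
  qed
  have "{W j<..W (j + Suc n)} = {W (j+n)<..W (Suc (j+n))} \<union> {W j<..W (j+n)}"
    using Suc.prems[of "j+n"] mono by auto
  then have "(\<Prod>x\<in>{W j<..W (j + Suc n)}. g x) = (\<Prod>x\<in>{W (j+n)<..W (Suc (j+n))}. g x) * (\<Prod>x\<in>{W j<..W (j+n)}. g x)"
    by (simp add: prod.union_disjoint ivl_disj_int)
  also have "(\<Prod>x\<in>{W j<..W (j+n)}. g x) = (\<Prod>i\<in>{Suc j..j+n}. \<Prod>y\<in>{W (i-1)<..W i}. g y)"
    using Suc by simp
  finally show ?case by (simp add: mult.commute)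
qed




locale ptn = fixes lam :: "nat list" assumes ip: "is_partition lam"
begin

abbreviation "d \<equiv> nd lam"
abbreviation "U \<equiv> uu lam"
abbreviation "W \<equiv> vs lam 1"

definition "sl = sorted_list_of_set (set lam)"

lemma sl_len: "length sl = d" by (simp add: sl_def nd_def)
lemma sl_sorted: "sorted_wrt (<) sl" by (simp add: sl_def)
lemma set_sl: "set sl = set lam" by (simp add: sl_def)

lemma sorted_lam: "sorted_wrt (\<ge>) lam" and pos_lam: "x \<in> set lam \<Longrightarrow> 0 < x"
  using ip by (auto simp: is_partition_def)

lemma uu_sl: "1 \<le> i \<Longrightarrow> i \<le> d \<Longrightarrow> U i = sl ! (d - i)"
  by (simp add: uu_def sl_def[symmetric] rev_nth sl_len Suc_diff_le)

lemma uu_0: "d < i \<Longrightarrow> U i = 0" by (simp add: uu_def)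

lemma uu_in: "1 \<le> i \<Longrightarrow> i \<le> d \<Longrightarrow> U i \<in> set lam"
  using uu_sl set_sl sl_len by (metis diff_less less_le_trans nth_mem zero_less_one)

lemma uu_pos: "1 \<le> i \<Longrightarrow> i \<le> d \<Longrightarrow> 0 < U i"
  using uu_in pos_lam by blast

lemma in_uu: "x \<in> set lam \<Longrightarrow> \<exists>i. 1 \<le> i \<and> i \<le> d \<and> U i = x"
proof -
  assume "x \<in> set lam"
  then obtain k where k: "k < d" "sl ! k = x" using set_sl sl_len by (metis in_set_conv_nth)
  then show ?thesis using uu_sl[of "d - k"] by (intro exI[of _ "d - k"]) auto
qed

lemma uu_strict: "1 \<le> i \<Longrightarrow> i < j \<Longrightarrow> j \<le> d+1 \<Longrightarrow> U j < U i"
proof -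
  assume a: "1 \<le> i" "i < j" "j \<le> d+1"
  show ?thesis
  proof (cases "j = d+1")
    case True then show ?thesis using uu_0 uu_pos a by simp
  next
    case False
    then have "sl ! (d - j) < sl ! (d - i)" using a sorted_wrt_nth_less[OF sl_sorted, of "d-j" "d-i"] sl_len
      by auto
    then show ?thesis using a False uu_sl by simp
  qed
qed

lemma uu_le_iff: "1 \<le> i \<Longrightarrow> i \<le> d+1 \<Longrightarrow> 1 \<le> j \<Longrightarrow> j \<le> d+1 \<Longrightarrow> U i \<le> U j \<longleftrightarrow> j \<le> i"
  using uu_strict by (metis le_less not_le)

lemma uu_less_iff: "1 \<le> i \<Longrightarrow> i \<le> d+1 \<Longrightarrow> 1 \<le> j \<Longrightarrow> j \<le> d+1 \<Longrightarrow> U i < U j \<longleftrightarrow> j < i"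
  using uu_le_iff by (meson not_le)

lemma vv_pos: "1 \<le> i \<Longrightarrow> i \<le> d \<Longrightarrow> 1 \<le> vv lam i"
  using uu_in count_list_0_iff by (fastforce simp: vv_def)

lemma vv_card: "1 \<le> i \<Longrightarrow> i \<le> d \<Longrightarrow> vv lam i = card {k. k < length lam \<and> lam ! k = U i}"
  by (simp add: vv_def count_list_eq_length_filter length_filter_conv_card eq_commute)

lemma W0: "W 0 = 0" by (simp add: vs_def)
lemma W_Suc: "W (Suc i) = W i + vv lam (Suc i)" by (simp add: vs_def)

lemma W_mono: "i \<le> j \<Longrightarrow> W i \<le> W j"
  unfolding vs_def by (rule sum_mono2) auto

lemma W_strict: "i < j \<Longrightarrow> j \<le> d \<Longrightarrow> W i < W j"
proof -
  assume a: "i < j" "j \<le> d"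
  have "W i \<le> W (j - 1)" using a by (intro W_mono) auto
  moreover have "W j = W (j-1) + vv lam j" using W_Suc[of "j-1"] a by simp
  moreover have "1 \<le> vv lam j" using vv_pos a by simp
  ultimately show ?thesis by simp
qed

lemma W_card: "1 \<le> i \<Longrightarrow> i \<le> d \<Longrightarrow> W i = card {k. k < length lam \<and> U i \<le> lam ! k}"
proof -
  assume a: "1 \<le> i" "i \<le> d"
  have key: "U i \<le> lam ! k \<longleftrightarrow> (\<exists>j\<in>{1..i}. lam ! k = U j)" if k: "k < length lam" for k
  proof
    assume "U i \<le> lam ! k"
    moreover obtain j where j: "1 \<le> j" "j \<le> d" "U j = lam ! k" using in_uu nth_mem k by metis
    ultimately have "j \<le> i" using uu_le_iff[of i j] a by simp
    then show "\<exists>j\<in>{1..i}. lam ! k = U j" using j by (intro bexI[of _ j]) auto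
  next
    assume "\<exists>j\<in>{1..i}. lam ! k = U j"
    then obtain j where "j \<in> {1..i}" "lam ! k = U j" by blast
    then show "U i \<le> lam ! k" using uu_le_iff[of i j] a by simp
  qed
  have "{k. k < length lam \<and> U i \<le> lam ! k} = (\<Union>j\<in>{1..i}. {k. k < length lam \<and> lam ! k = U j})"
    using key by auto
  note UNeq = this
  have "card {k. k < length lam \<and> U i \<le> lam ! k} = (\<Sum>j\<in>{1..i}. card {k. k < length lam \<and> lam ! k = U j})"
    unfolding UNeq
  proof (rule card_UN_disjoint)
    show "\<forall>j\<in>{1..i}. \<forall>j'\<in>{1..i}. j \<noteq> j' \<longrightarrow>
      {k. k < length lam \<and> lam ! k = U j} \<inter> {k. k < length lam \<and> lam ! k = U j'} = {}"
    proof (intro ballI impI)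
      fix j j' assume "j \<in> {1..i}" "j' \<in> {1..i}" "j \<noteq> j'"
      then have "U j \<noteq> U j'" using uu_strict[of j j'] uu_strict[of j' j] a
        by (cases "j < j'") auto
      then show "{k. k < length lam \<and> lam ! k = U j} \<inter> {k. k < length lam \<and> lam ! k = U j'} = {}"
        by auto
    qed
  qed auto
  also have "\<dots> = (\<Sum>j\<in>{1..i}. vv lam j)" using a by (intro sum.cong) (auto simp: vv_card)
  finally show ?thesis by (simp add: vs_def)
qed

lemma W_prefix: "k < length lam \<Longrightarrow> 1 \<le> i \<Longrightarrow> i \<le> d \<Longrightarrow> U i \<le> lam ! k \<longleftrightarrow> k < W i"
proof -
  assume a: "k < length lam" "1 \<le> i" "i \<le> d"
  let ?S = "{k. k < length lam \<and> U i \<le> lam ! k}"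
  have fin: "finite ?S" by simp
  have dc: "k' \<in> ?S" if "k \<in> ?S" "k' \<le> k" for k k'
    using that sorted_wrt_nth_less[OF sorted_lam, of k' k] by (cases "k' = k") auto
  show ?thesis
  proof
    assume h: "U i \<le> lam ! k"
    have "{..k} \<subseteq> ?S" using dc[of k] h a by auto
    then have "card {..k} \<le> card ?S" using fin by (rule card_mono[rotated])
    then show "k < W i" using W_card a by simp
  next
    assume h: "k < W i"
    show "U i \<le> lam ! k"
    proof (rule ccontr)
      assume nk: "\<not> U i \<le> lam ! k"
      have "?S \<subseteq> {..<k}"
      proof
        fix k'' assume k'': "k'' \<in> ?S"
        show "k'' \<in> {..<k}"
        proof (rule ccontr)
          assume "k'' \<notin> {..<k}"
          then have "k \<le> k''" by simp
          then have "k \<in> ?S" using dc k'' by blast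
          then show False using nk by simp
        qed
      qed
      then have "card ?S \<le> card {..<k}" by (intro card_mono) auto
      then have "card ?S \<le> k" by simp
      then show False using h W_card a by simp
    qed
  qed
qed

lemma W_d: "W d = length lam"
proof (cases "d = 0")
  case True
  then have "set lam = {}" by (simp add: nd_def)
  then show ?thesis using True W0 by simp
next
  case False
  have "{k. k < length lam \<and> U d \<le> lam ! k} = {..<length lam}"
  proof safe
    fix k assume "k < length lam"
    then obtain j where j: "1 \<le> j" "j \<le> d" "U j = lam ! k" using in_uu nth_mem by metis
    then show "U d \<le> lam ! k" using uu_le_iff[of d j] False by simp
  qed
  then show ?thesis using W_card[of d] False by simp
qed

lemma W_le: "W i \<le> length lam"
proof (cases "i \<le> d")
  case True then show ?thesis using W_mono[of i d] W_d by simp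
next
  case False
  have "W i = W d" unfolding vs_def
    by (rule sum.mono_neutral_right) (use False in \<open>auto simp: vv_def\<close>)
  then show ?thesis using W_d by simp
qed

lemma row_nth: "1 \<le> y \<Longrightarrow> y \<le> length lam \<Longrightarrow> row lam y = lam ! (y - 1)"
  by (simp add: row_def)

lemma R1: "1 \<le> y \<Longrightarrow> 1 \<le> i \<Longrightarrow> i \<le> d \<Longrightarrow> U i \<le> row lam y \<longleftrightarrow> y \<le> W i"
proof -
  assume a: "1 \<le> y" "1 \<le> i" "i \<le> d"
  show ?thesis
  proof (cases "y \<le> length lam")
    case True then show ?thesis using W_prefix[of "y-1" i] a row_nth by auto
  next
    case False then show ?thesis using uu_pos[of i] a W_le[of i] by (auto simp: row_def)
  qed
qed

lemma R2: "1 \<le> y \<Longrightarrow> i \<le> d \<Longrightarrow> U (Suc i) < row lam y \<longleftrightarrow> y \<le> W i"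
proof -
  assume a: "1 \<le> y" "i \<le> d"
  show ?thesis
  proof (cases "y \<le> length lam")
    case True
    then have "row lam y \<in> set lam" using a row_nth by simp
    then obtain j where j: "1 \<le> j" "j \<le> d" "U j = row lam y" using in_uu by blast
    have "U (Suc i) < U j \<longleftrightarrow> j \<le> i" using uu_less_iff[of "Suc i" j] a j by auto
    moreover have "j \<le> i \<longleftrightarrow> y \<le> W i"
    proof
      assume "j \<le> i" then show "y \<le> W i" using R1[of y j] a j W_mono[of j i] by auto
    next
      assume h: "y \<le> W i"
      show "j \<le> i"
      proof (rule ccontr)
        assume "\<not> j \<le> i"
        then have "1 \<le> i" using h a W0 by (cases i) auto
        then have "U i \<le> U j" using R1[of y i] a h j by simp
        then show False using uu_le_iff[of i j] \<open>\<not> j \<le> i\<close> a j \<open>1 \<le> i\<close> by simp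
      qed
    qed
    ultimately show ?thesis using j by simp
  next
    case False then show ?thesis using W_le[of i] by (auto simp: row_def)
  qed
qed

lemma row_block: "1 \<le> i \<Longrightarrow> i \<le> d \<Longrightarrow> W (i-1) < y \<Longrightarrow> y \<le> W i \<Longrightarrow> row lam y = U i"
proof -
  assume a: "1 \<le> i" "i \<le> d" "W (i-1) < y" "y \<le> W i"
  then have "1 \<le> y" by simp
  then have "U i \<le> row lam y" using R1 a by simp
  moreover have "\<not> U i < row lam y" using R2[of y "i-1"] a \<open>1 \<le> y\<close> by simp
  ultimately show ?thesis by simp
qed

lemma conj_block: "1 \<le> i \<Longrightarrow> i \<le> d \<Longrightarrow> U (Suc i) < x \<Longrightarrow> x \<le> U i \<Longrightarrow> conjugate lam x = W i"
proof -
  assume a: "1 \<le> i" "i \<le> d" "U (Suc i) < x" "x \<le> U i"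
  have "\<And>y. 1 \<le> y \<Longrightarrow> x \<le> row lam y \<longleftrightarrow> y \<le> W i"
  proof -
    fix y :: nat assume y: "1 \<le> y"
    show "x \<le> row lam y \<longleftrightarrow> y \<le> W i" using R1[of y i] R2[of y i] a y by auto
  qed
  then have "{y. 1 \<le> y \<and> x \<le> row lam y} = {1..W i}" by auto
  then show ?thesis by (simp add: conjugate_def)
qed

end



lemma split_ivl: "(a::nat) \<le> b \<Longrightarrow> b \<le> c \<Longrightarrow> (\<Prod>x\<in>{a<..c}. g x) = (\<Prod>x\<in>{a<..b}. g x) * (\<Prod>x\<in>{b<..c}. (g x :: 'a::comm_monoid_mult))"
proof -
  assume "a \<le> b" "b \<le> c"
  then have "{a<..c} = {a<..b} \<union> {b<..c}" by auto
  then show ?thesis by (simp add: prod.union_disjoint ivl_disj_int)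
qed

lemma row_add_cell: "1 \<le> y0 \<Longrightarrow> y0 \<le> length xs + 1 \<Longrightarrow>
   row (add_cell xs y0) y = row xs y + (if y = y0 then 1 else 0)"
  by (cases "y0 \<le> length xs") (auto simp: add_cell_def row_def nth_list_update nth_append)

lemma row_Cons: "row (a # xs) y = (if y = 0 then 0 else if y = 1 then a else row xs (y - 1))"
  by (cases y) (auto simp: row_def nth_Cons')

lemma row_Nil[simp]: "row [] y = 0" by (simp add: row_def)

lemma row_in: "row xs y = 0 \<or> row xs y \<in> set xs"
  by (auto simp: row_def)

lemma row_filter_pos: "sorted_wrt (\<ge>) xs \<Longrightarrow> row (filter (\<lambda>x. 0 < x) xs) y = row xs y"
proof (induction xs arbitrary: y)
  case Nil then show ?case by simp
next
  case (Cons a xs)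
  show ?case
  proof (cases "0 < a")
    case True
    then show ?thesis using Cons by (simp add: row_Cons)
  next
    case False
    then have "\<forall>x\<in>set xs. x = 0" using Cons.prems by auto
    then have "row xs (y-1) = 0" using row_in[of xs "y-1"] by auto
    moreover have "filter (\<lambda>x. 0 < x) xs = []" using \<open>\<forall>x\<in>set xs. x = 0\<close> by (simp add: filter_empty_conv)
    ultimately show ?thesis using False by (simp add: row_Cons)
  qed
qed

context ptn
begin

lemma hs_eq: "1 \<le> i \<Longrightarrow> i \<le> j+1 \<Longrightarrow> j \<le> d \<Longrightarrow> hs lam i j = U i - U (j+1)"
proof (induction j)
  case 0 then show ?case by (simp add: hs_def)
next
  case (Suc j)
  show ?case
  proof (cases "i = Suc j + 1")
    case True then show ?thesis by (simp add: hs_def)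
  next
    case False
    then have "hs lam i (Suc j) = hs lam i j + hh lam (Suc j)" using Suc.prems by (simp add: hs_def)
    also have "hs lam i j = U i - U (j+1)" using Suc False by simp
    also have "hh lam (Suc j) = U (Suc j) - U (Suc j + 1)" using Suc.prems by (simp add: hh_def)
    finally show ?thesis using uu_le_iff[of "Suc j" i] uu_le_iff[of "Suc (Suc j)" "Suc j"] Suc.prems False by simp
  qed
qed

lemma vs_eq: "1 \<le> i \<Longrightarrow> i \<le> j+1 \<Longrightarrow> vs lam i j = W j - W (i-1)"
proof (induction j)
  case 0 then show ?case by (simp add: vs_def)
next
  case (Suc j)
  show ?case
  proof (cases "i = Suc j + 1")
    case True then show ?thesis by (simp add: vs_def)
  next
    case False
    then have "vs lam i (Suc j) = vs lam i j + vv lam (Suc j)" using Suc.prems by (simp add: vs_def)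
    also have "vs lam i j = W j - W (i-1)" using Suc False by simp
    finally show ?thesis using W_Suc[of j] W_mono[of "i-1" j] Suc.prems False by simp
  qed
qed

lemma row_W: "1 \<le> i \<Longrightarrow> i \<le> d \<Longrightarrow> row lam (W i) = U i"
  using row_block[of i "W i"] W_strict[of "i-1" i] by simp

lemma row_Ws: "s \<le> d \<Longrightarrow> row lam (W s + 1) = U (s+1)"
proof (cases "s < d")
  case True
  then show ?thesis using row_block[of "s+1" "W s + 1"] W_strict[of s "s+1"] by simp
next
  case False
  assume "s \<le> d"
  then have "s = d" using False by simp
  then show ?thesis using W_d uu_0[of "d+1"] by (simp add: row_def)
qed

lemma onecell_plus: "s \<le> d \<Longrightarrow> onecell lam (lplus lam s) (U (s+1) + 1) (W s + 1)"
proof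
  assume s: "s \<le> d"
  show "row (lplus lam s) y = row lam y + (if y = W s + 1 then 1 else 0)" for y
    unfolding lplus_def using W_le[of s] by (intro row_add_cell) auto
  show "1 \<le> W s + 1" by simp
  show "U (s + 1) + 1 = row lam (W s + 1) + 1" using row_Ws s by simp
  show "1 \<le> y \<Longrightarrow> (U (s + 1) + 1 \<le> row lam y) = (y < W s + 1)" for y
    using R2[of y s] s by auto
qed

lemma lam_lt: "k < length lam \<Longrightarrow> 1 \<le> r \<Longrightarrow> r \<le> d \<Longrightarrow> W r \<le> k \<Longrightarrow> lam ! k < U r"
  using W_prefix[of k r] by simp

lemma row_minus: "1 \<le> r \<Longrightarrow> r \<le> d \<Longrightarrow> row lam y = row (lminus lam r) y + (if y = W r then 1 else 0)"
proof -
  assume r: "1 \<le> r" "r \<le> d"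
  define k where "k = W r - 1"
  have Wr: "1 \<le> W r" "W r \<le> length lam" using W_strict[of 0 r] W0 W_le[of r] r by auto
  have kl: "k < length lam" using Wr k_def by simp
  have lk: "lam ! k = U r" using row_W[OF r] row_nth[of "W r"] Wr k_def by simp
  define xs where "xs = lam[k := lam ! k - 1]"
  have srt: "sorted_wrt (\<ge>) xs"
    unfolding sorted_wrt_iff_nth_less
  proof (intro allI impI)
    fix i j assume ij: "i < j" "j < length xs"
    have lij: "lam ! j \<le> lam ! i" using sorted_wrt_nth_less[OF sorted_lam, of i j] ij by (simp add: xs_def)
    show "xs ! j \<le> xs ! i"
    proof (cases "i = k")
      case True
      then have "lam ! j < U r" using lam_lt[of j r] ij r k_def Wr by (simp add: xs_def)
      then show ?thesis using True ij lk by (simp add: xs_def nth_list_update)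
    next
      case False
      then show ?thesis using lij ij by (cases "j = k") (auto simp: xs_def)
    qed
  qed
  have "row (lminus lam r) y = row xs y"
    using r srt by (simp add: lminus_def rem_cell_def xs_def k_def row_filter_pos)
  also have "row xs y = row lam y - (if y = W r then 1 else 0)"
    using kl k_def Wr by (auto simp: row_def xs_def nth_list_update)
  finally show ?thesis using row_W[OF r] uu_pos[OF r] by auto
qed

lemma onecell_minus: "1 \<le> r \<Longrightarrow> r \<le> d \<Longrightarrow> onecell (lminus lam r) lam (U r) (W r)"
proof
  assume r: "1 \<le> r" "r \<le> d"
  show "row lam y = row (lminus lam r) y + (if y = W r then 1 else 0)" for y
    using row_minus[OF r] .
  show "1 \<le> W r" using W_strict[of 0 r] W0 r by auto
  show "U r = row (lminus lam r) (W r) + 1" using row_minus[OF r, of "W r"] row_W[OF r] by simp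
  show "1 \<le> y \<Longrightarrow> (U r \<le> row (lminus lam r) y) = (y < W r)" for y
    using row_minus[OF r, of y] R1[of y r] r row_W[OF r] by (cases "y = W r") auto
qed

end



context ptn
begin

lemma gal_plus:
  fixes F G :: "nat \<Rightarrow> nat \<Rightarrow> 'a::field"
  assumes Fnz: "\<And>a l. F a l \<noteq> 0" and Gnz: "\<And>a l. G a l \<noteq> 0" and s: "s \<le> d"
  shows "gal F G (lplus lam s) lam =
    (\<Prod>i=s+1..d. F (hs lam (s+1) (i-1)) (vs lam (s+1) i - 1) / F (hs lam (s+1) i) (vs lam (s+1) i - 1)) *
    (\<Prod>i=1..s. G (hs lam i s - 1) (vs lam (i+1) s) / G (hs lam i s - 1) (vs lam i s))"
proof -
  interpret oc: onecell lam "lplus lam s" "U (s+1) + 1" "W s + 1" using onecell_plus[OF s] .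
  have g: "gal F G (lplus lam s) lam =
    (\<Prod>x\<in>{0<..U (s+1)}. F (U (s+1) - x) (conjugate lam x - (W s + 1)) / F (U (s+1) - x + 1) (conjugate lam x - (W s + 1))) *
    (\<Prod>y\<in>{0<..W s}. G (row lam y - (U (s+1) + 1)) (W s - y) / G (row lam y - (U (s+1) + 1)) (W s - y + 1))"
    using oc.gal_eq[of F G] by simp
  have rowp: "(\<Prod>x\<in>{0<..U (s+1)}. F (U (s+1) - x) (conjugate lam x - (W s + 1)) / F (U (s+1) - x + 1) (conjugate lam x - (W s + 1)))
     = (\<Prod>i=s+1..d. F (hs lam (s+1) (i-1)) (vs lam (s+1) i - 1) / F (hs lam (s+1) i) (vs lam (s+1) i - 1))"
  proof -
    have e: "{0<..U (s+1)} = {U (s+1 + (d-s))<..U (s+1)}" using uu_0[of "d+1"] s by simp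
    have "(\<Prod>x\<in>{0<..U (s+1)}. F (U (s+1) - x) (conjugate lam x - (W s + 1)) / F (U (s+1) - x + 1) (conjugate lam x - (W s + 1)))
      = (\<Prod>i\<in>{s+1..<s+1+(d-s)}. \<Prod>x\<in>{U (Suc i)<..U i}. F (U (s+1) - x) (conjugate lam x - (W s + 1)) / F (U (s+1) - x + 1) (conjugate lam x - (W s + 1)))"
      unfolding e by (rule blocks_anti) (use uu_le_iff in auto)
    also have "\<dots> = (\<Prod>i=s+1..d. F (hs lam (s+1) (i-1)) (vs lam (s+1) i - 1) / F (hs lam (s+1) i) (vs lam (s+1) i - 1))"
    proof (rule prod.cong)
      show "{s+1..<s+1+(d-s)} = {s+1..d}" using s by auto
    next
      fix i assume i: "i \<in> {s+1..d}"
      have le1: "U (Suc i) \<le> U i" "U i \<le> U (s+1)" using uu_le_iff[of "Suc i" i] uu_le_iff[of i "s+1"] i by auto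
      have "(\<Prod>x\<in>{U (Suc i)<..U i}. F (U (s+1) - x) (conjugate lam x - (W s + 1)) / F (U (s+1) - x + 1) (conjugate lam x - (W s + 1)))
        = (\<Prod>x\<in>{U (Suc i)<..U i}. F (U (s+1) - x) (W i - (W s + 1)) / F (U (s+1) - x + 1) (W i - (W s + 1)))"
        by (rule prod.cong) (use conj_block[of i] i in auto)
      also have "\<dots> = F (U (s+1) - U i) (W i - (W s + 1)) / F (U (s+1) - U (Suc i)) (W i - (W s + 1))"
        by (rule telescope[where f = "\<lambda>a. F a (W i - (W s + 1))"]) (use Fnz le1 in auto)
      also have "\<dots> = F (hs lam (s+1) (i-1)) (vs lam (s+1) i - 1) / F (hs lam (s+1) i) (vs lam (s+1) i - 1)"
      proof -
        have h1: "hs lam (s+1) (i-1) = U (s+1) - U i" using hs_eq[of "s+1" "i-1"] i by auto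
        have h2: "hs lam (s+1) i = U (s+1) - U (Suc i)" using hs_eq[of "s+1" i] i by auto
        have v1: "vs lam (s+1) i = W i - W s" using vs_eq[of "s+1" i] i by auto
        show ?thesis unfolding h1 h2 v1 by simp
      qed
      finally show "(\<Prod>x\<in>{U (Suc i)<..U i}. F (U (s+1) - x) (conjugate lam x - (W s + 1)) / F (U (s+1) - x + 1) (conjugate lam x - (W s + 1)))
        = F (hs lam (s+1) (i-1)) (vs lam (s+1) i - 1) / F (hs lam (s+1) i) (vs lam (s+1) i - 1)" .
    qed
    finally show ?thesis .
  qed
  have colp: "(\<Prod>y\<in>{0<..W s}. G (row lam y - (U (s+1) + 1)) (W s - y) / G (row lam y - (U (s+1) + 1)) (W s - y + 1))
     = (\<Prod>i=1..s. G (hs lam i s - 1) (vs lam (i+1) s) / G (hs lam i s - 1) (vs lam i s))"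
  proof -
    have e: "{0<..W s} = {W 0<..W (0+s)}" using W0 by simp
    have "(\<Prod>y\<in>{0<..W s}. G (row lam y - (U (s+1) + 1)) (W s - y) / G (row lam y - (U (s+1) + 1)) (W s - y + 1))
      = (\<Prod>i\<in>{Suc 0..0+s}. \<Prod>y\<in>{W (i-1)<..W i}. G (row lam y - (U (s+1) + 1)) (W s - y) / G (row lam y - (U (s+1) + 1)) (W s - y + 1))"
      unfolding e by (rule blocks_mono) (use W_mono in auto)
    also have "\<dots> = (\<Prod>i=1..s. G (hs lam i s - 1) (vs lam (i+1) s) / G (hs lam i s - 1) (vs lam i s))"
    proof (rule prod.cong)
      show "{Suc 0..0+s} = {1..s}" by simp
    next
      fix i assume i: "i \<in> {1..s}"
      have le1: "W (i-1) \<le> W i" "W i \<le> W s" using W_mono[of "i-1" i] W_mono[of i s] i by auto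
      have "(\<Prod>y\<in>{W (i-1)<..W i}. G (row lam y - (U (s+1) + 1)) (W s - y) / G (row lam y - (U (s+1) + 1)) (W s - y + 1))
        = (\<Prod>y\<in>{W (i-1)<..W i}. G (U i - (U (s+1) + 1)) (W s - y) / G (U i - (U (s+1) + 1)) (W s - y + 1))"
        by (rule prod.cong) (use row_block[of i] i s in auto)
      also have "\<dots> = G (U i - (U (s+1) + 1)) (W s - W i) / G (U i - (U (s+1) + 1)) (W s - W (i-1))"
        by (rule telescope[where f = "\<lambda>l. G (U i - (U (s+1) + 1)) l"]) (use Gnz le1 in auto)
      also have "\<dots> = G (hs lam i s - 1) (vs lam (i+1) s) / G (hs lam i s - 1) (vs lam i s)"
      proof -
        have h1: "hs lam i s = U i - U (s+1)" using hs_eq[of i s] i s by auto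
        have v1: "vs lam (i+1) s = W s - W i" using vs_eq[of "i+1" s] i by auto
        have v2: "vs lam i s = W s - W (i-1)" using vs_eq[of i s] i by auto
        show ?thesis unfolding h1 v1 v2 by simp
      qed
      finally show "(\<Prod>y\<in>{W (i-1)<..W i}. G (row lam y - (U (s+1) + 1)) (W s - y) / G (row lam y - (U (s+1) + 1)) (W s - y + 1))
        = G (hs lam i s - 1) (vs lam (i+1) s) / G (hs lam i s - 1) (vs lam i s)" .
    qed
    finally show ?thesis .
  qed
  show ?thesis unfolding g rowp colp ..
qed


lemma gal_minus:
  fixes F G :: "nat \<Rightarrow> nat \<Rightarrow> 'a::field"
  assumes Fnz: "\<And>a l. F a l \<noteq> 0" and Gnz: "\<And>a l. G a l \<noteq> 0" and r: "1 \<le> r" "r \<le> d"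
  shows "gal F G lam (lminus lam r) =
    ((\<Prod>i=r+1..d. F (hs lam r (i-1) - 1) (vs lam (r+1) i) / F (hs lam r i - 1) (vs lam (r+1) i)) *
     (F 0 0 / F (hh lam r - 1) 0)) *
    ((\<Prod>i=1..r-1. G (hs lam i (r-1)) (vs lam (i+1) r - 1) / G (hs lam i (r-1)) (vs lam i r - 1)) *
     (G 0 0 / G 0 (vs lam r r - 1)))"
proof -
  interpret oc: onecell "lminus lam r" lam "U r" "W r" using onecell_minus[OF r] .
  have Wr: "W (r-1) < W r" using W_strict[of "r-1" r] r by simp
  have Ur: "U (Suc r) < U r" using uu_strict[of r "Suc r"] r by simp
  have g: "gal F G lam (lminus lam r) =
    (\<Prod>x\<in>{0<..U r - 1}. F (U r - 1 - x) (conjugate lam x - W r) / F (U r - 1 - x + 1) (conjugate lam x - W r)) *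
    (\<Prod>y\<in>{0<..W r - 1}. G (row lam y - U r) (W r - 1 - y) / G (row lam y - U r) (W r - 1 - y + 1))"
  proof -
    have 1: "(\<Prod>x\<in>{0<..U r - 1}. F (U r - 1 - x) (conjugate (lminus lam r) x - W r) / F (U r - 1 - x + 1) (conjugate (lminus lam r) x - W r))
      = (\<Prod>x\<in>{0<..U r - 1}. F (U r - 1 - x) (conjugate lam x - W r) / F (U r - 1 - x + 1) (conjugate lam x - W r))"
      by (rule prod.cong) (use oc.conj_other in auto)
    have 2: "(\<Prod>y\<in>{0<..W r - 1}. G (row (lminus lam r) y - U r) (W r - 1 - y) / G (row (lminus lam r) y - U r) (W r - 1 - y + 1))
      = (\<Prod>y\<in>{0<..W r - 1}. G (row lam y - U r) (W r - 1 - y) / G (row lam y - U r) (W r - 1 - y + 1))"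
      by (rule prod.cong) (use row_minus[OF r] in auto)
    show ?thesis using oc.gal_eq[of F G] 1 2 by simp
  qed
  have rowA: "(\<Prod>x\<in>{0<..U (Suc r)}. F (U r - 1 - x) (conjugate lam x - W r) / F (U r - 1 - x + 1) (conjugate lam x - W r))
     = (\<Prod>i=r+1..d. F (hs lam r (i-1) - 1) (vs lam (r+1) i) / F (hs lam r i - 1) (vs lam (r+1) i))"
  proof -
    have e: "{0<..U (Suc r)} = {U (r+1 + (d-r))<..U (r+1)}" using uu_0[of "d+1"] r by simp
    have "(\<Prod>x\<in>{0<..U (Suc r)}. F (U r - 1 - x) (conjugate lam x - W r) / F (U r - 1 - x + 1) (conjugate lam x - W r))
      = (\<Prod>i\<in>{r+1..<r+1+(d-r)}. \<Prod>x\<in>{U (Suc i)<..U i}. F (U r - 1 - x) (conjugate lam x - W r) / F (U r - 1 - x + 1) (conjugate lam x - W r))"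
      unfolding e by (rule blocks_anti) (use uu_le_iff in auto)
    also have "\<dots> = (\<Prod>i=r+1..d. F (hs lam r (i-1) - 1) (vs lam (r+1) i) / F (hs lam r i - 1) (vs lam (r+1) i))"
    proof (rule prod.cong)
      show "{r+1..<r+1+(d-r)} = {r+1..d}" using r by auto
    next
      fix i assume i: "i \<in> {r+1..d}"
      have le1: "U (Suc i) \<le> U i" "U i \<le> U r - 1" using uu_le_iff[of "Suc i" i] uu_strict[of r i] i r by auto
      have "(\<Prod>x\<in>{U (Suc i)<..U i}. F (U r - 1 - x) (conjugate lam x - W r) / F (U r - 1 - x + 1) (conjugate lam x - W r))
        = (\<Prod>x\<in>{U (Suc i)<..U i}. F (U r - 1 - x) (W i - W r) / F (U r - 1 - x + 1) (W i - W r))"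
        by (rule prod.cong) (use conj_block[of i] i r in auto)
      also have "\<dots> = F (U r - 1 - U i) (W i - W r) / F (U r - 1 - U (Suc i)) (W i - W r)"
        by (rule telescope[where f = "\<lambda>a. F a (W i - W r)"]) (use Fnz le1 in auto)
      also have "\<dots> = F (hs lam r (i-1) - 1) (vs lam (r+1) i) / F (hs lam r i - 1) (vs lam (r+1) i)"
      proof -
        have h1: "hs lam r (i-1) = U r - U i" using hs_eq[of r "i-1"] i r by auto
        have h2: "hs lam r i = U r - U (Suc i)" using hs_eq[of r i] i r by auto
        have v1: "vs lam (r+1) i = W i - W r" using vs_eq[of "r+1" i] i by auto
        show ?thesis unfolding h1 h2 v1 by simp
      qed
      finally show "(\<Prod>x\<in>{U (Suc i)<..U i}. F (U r - 1 - x) (conjugate lam x - W r) / F (U r - 1 - x + 1) (conjugate lam x - W r))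
        = F (hs lam r (i-1) - 1) (vs lam (r+1) i) / F (hs lam r i - 1) (vs lam (r+1) i)" .
    qed
    finally show ?thesis .
  qed
  have rowB: "(\<Prod>x\<in>{U (Suc r)<..U r - 1}. F (U r - 1 - x) (conjugate lam x - W r) / F (U r - 1 - x + 1) (conjugate lam x - W r))
     = F 0 0 / F (hh lam r - 1) 0"
  proof -
    have "(\<Prod>x\<in>{U (Suc r)<..U r - 1}. F (U r - 1 - x) (conjugate lam x - W r) / F (U r - 1 - x + 1) (conjugate lam x - W r))
       = (\<Prod>x\<in>{U (Suc r)<..U r - 1}. F (U r - 1 - x) 0 / F (U r - 1 - x + 1) 0)"
      by (rule prod.cong) (use conj_block[of r] r in auto)
    also have "\<dots> = F (U r - 1 - (U r - 1)) 0 / F (U r - 1 - U (Suc r)) 0"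
      by (rule telescope[where f = "\<lambda>a. F a 0"]) (use Fnz Ur in auto)
    also have "\<dots> = F 0 0 / F (hh lam r - 1) 0" using r by (simp add: hh_def)
    finally show ?thesis .
  qed
  have colC: "(\<Prod>y\<in>{0<..W (r-1)}. G (row lam y - U r) (W r - 1 - y) / G (row lam y - U r) (W r - 1 - y + 1))
     = (\<Prod>i=1..r-1. G (hs lam i (r-1)) (vs lam (i+1) r - 1) / G (hs lam i (r-1)) (vs lam i r - 1))"
  proof -
    have e: "{0<..W (r-1)} = {W 0<..W (0+(r-1))}" using W0 by simp
    have "(\<Prod>y\<in>{0<..W (r-1)}. G (row lam y - U r) (W r - 1 - y) / G (row lam y - U r) (W r - 1 - y + 1))
      = (\<Prod>i\<in>{Suc 0..0+(r-1)}. \<Prod>y\<in>{W (i-1)<..W i}. G (row lam y - U r) (W r - 1 - y) / G (row lam y - U r) (W r - 1 - y + 1))"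
      unfolding e by (rule blocks_mono) (use W_mono in auto)
    also have "\<dots> = (\<Prod>i=1..r-1. G (hs lam i (r-1)) (vs lam (i+1) r - 1) / G (hs lam i (r-1)) (vs lam i r - 1))"
    proof (rule prod.cong)
      show "{Suc 0..0+(r-1)} = {1..r-1}" by simp
    next
      fix i assume i: "i \<in> {1..r-1}"
      have "i < r" using i r by auto
      then have le1: "W (i-1) \<le> W i" "W i \<le> W r - 1" using W_mono[of "i-1" i] W_strict[of i r] r by auto
      have "(\<Prod>y\<in>{W (i-1)<..W i}. G (row lam y - U r) (W r - 1 - y) / G (row lam y - U r) (W r - 1 - y + 1))
        = (\<Prod>y\<in>{W (i-1)<..W i}. G (U i - U r) (W r - 1 - y) / G (U i - U r) (W r - 1 - y + 1))"
        by (rule prod.cong) (use row_block[of i] i r in auto)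
      also have "\<dots> = G (U i - U r) (W r - 1 - W i) / G (U i - U r) (W r - 1 - W (i-1))"
        by (rule telescope[where f = "\<lambda>l. G (U i - U r) l"]) (use Gnz le1 in auto)
      also have "\<dots> = G (hs lam i (r-1)) (vs lam (i+1) r - 1) / G (hs lam i (r-1)) (vs lam i r - 1)"
      proof -
        have h1: "hs lam i (r-1) = U i - U r" using hs_eq[of i "r-1"] i r by auto
        have v1: "vs lam (i+1) r = W r - W i" using vs_eq[of "i+1" r] i r by auto
        have v2: "vs lam i r = W r - W (i-1)" using vs_eq[of i r] i r by auto
        show ?thesis unfolding h1 v1 v2 by simp
      qed
      finally show "(\<Prod>y\<in>{W (i-1)<..W i}. G (row lam y - U r) (W r - 1 - y) / G (row lam y - U r) (W r - 1 - y + 1))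
        = G (hs lam i (r-1)) (vs lam (i+1) r - 1) / G (hs lam i (r-1)) (vs lam i r - 1)" .
    qed
    finally show ?thesis .
  qed
  have colD: "(\<Prod>y\<in>{W (r-1)<..W r - 1}. G (row lam y - U r) (W r - 1 - y) / G (row lam y - U r) (W r - 1 - y + 1))
     = G 0 0 / G 0 (vs lam r r - 1)"
  proof -
    have "(\<Prod>y\<in>{W (r-1)<..W r - 1}. G (row lam y - U r) (W r - 1 - y) / G (row lam y - U r) (W r - 1 - y + 1))
       = (\<Prod>y\<in>{W (r-1)<..W r - 1}. G 0 (W r - 1 - y) / G 0 (W r - 1 - y + 1))"
      by (rule prod.cong) (use row_block[of r] r in auto)
    also have "\<dots> = G 0 (W r - 1 - (W r - 1)) / G 0 (W r - 1 - W (r-1))"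
      by (rule telescope[where f = "\<lambda>l. G 0 l"]) (use Gnz Wr in auto)
    also have "\<dots> = G 0 0 / G 0 (vs lam r r - 1)" using vs_eq[of r r] r by simp
    finally show ?thesis .
  qed
  have sp1: "(\<Prod>x\<in>{0<..U r - 1}. F (U r - 1 - x) (conjugate lam x - W r) / F (U r - 1 - x + 1) (conjugate lam x - W r))
    = (\<Prod>x\<in>{0<..U (Suc r)}. F (U r - 1 - x) (conjugate lam x - W r) / F (U r - 1 - x + 1) (conjugate lam x - W r)) *
      (\<Prod>x\<in>{U (Suc r)<..U r - 1}. F (U r - 1 - x) (conjugate lam x - W r) / F (U r - 1 - x + 1) (conjugate lam x - W r))"
    by (rule split_ivl) (use Ur in auto)
  have sp2: "(\<Prod>y\<in>{0<..W r - 1}. G (row lam y - U r) (W r - 1 - y) / G (row lam y - U r) (W r - 1 - y + 1))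
    = (\<Prod>y\<in>{0<..W (r-1)}. G (row lam y - U r) (W r - 1 - y) / G (row lam y - U r) (W r - 1 - y + 1)) *
      (\<Prod>y\<in>{W (r-1)<..W r - 1}. G (row lam y - U r) (W r - 1 - y) / G (row lam y - U r) (W r - 1 - y + 1))"
    by (rule split_ivl) (use Wr in auto)
  show ?thesis unfolding g sp1 sp2 rowA rowB colC colD ..
qed

end



context ptn
begin

lemma hs_pos: "1 \<le> i \<Longrightarrow> i \<le> j \<Longrightarrow> j \<le> d \<Longrightarrow> 1 \<le> hs lam i j"
  using hs_eq[of i j] uu_strict[of i "j+1"] by simp

lemma vs_pos: "1 \<le> i \<Longrightarrow> i \<le> j \<Longrightarrow> j \<le> d \<Longrightarrow> 1 \<le> vs lam i j"
proof -
  assume a: "1 \<le> i" "i \<le> j" "j \<le> d"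
  then have "W (i-1) < W j" using W_strict[of "i-1" j] by simp
  then show ?thesis using vs_eq[of i j] a by simp
qed

lemma gAB:
  assumes r: "1 \<le> r" "r \<le> d" and s: "s \<le> d"
  shows "gA (lplus lam s) lam (lminus lam r) = int (U r) - 1 - int (U (s+1))"
    and "gB (lplus lam s) lam (lminus lam r) = int (W s) - int (W r) + 1"
proof -
  interpret op: onecell lam "lplus lam s" "U (s+1) + 1" "W s + 1" using onecell_plus[OF s] .
  interpret om: onecell "lminus lam r" lam "U r" "W r" using onecell_minus[OF r] .
  have "1 \<le> W r" using W_strict[of 0 r] W0 r by auto
  moreover have "1 \<le> U r" using uu_pos r by (simp add: Suc_le_eq)
  ultimately show "gA (lplus lam s) lam (lminus lam r) = int (U r) - 1 - int (U (s+1))"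
    and "gB (lplus lam s) lam (lminus lam r) = int (W s) - int (W r) + 1"
    using op.nn_rho op.nn'_rho om.nn_rho om.nn'_rho by (simp_all add: gA_def gB_def of_nat_diff)
qed

lemma nn_plus: "s \<le> d \<Longrightarrow> nn (lplus lam s) = nn lam + W s"
proof -
  assume s: "s \<le> d"
  interpret op: onecell lam "lplus lam s" "U (s+1) + 1" "W s + 1" using onecell_plus[OF s] .
  show ?thesis using op.nn_rho by simp
qed

end

lemma gamma_alg:
  fixes q t :: "'a::field" and H V :: int
  assumes "q \<noteq> 0" "t \<noteq> 0"
  shows "(1 - q powi (-H-1) * t powi (1-V)) * (1 - q powi (-H) * t powi (-V)) =
    (1 - q powi H * t powi V) * (1 - q powi (H+1) * t powi (V-1)) * (q powi (-1-2*H) * t powi (1-2*V))"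
proof -
  have e1: "q powi (-H-1) = inverse (q powi H) * inverse q" using assms
    by (simp add: power_int_diff power_int_minus field_simps)
  have e2: "t powi (1-V) = t * inverse (t powi V)" using assms
    by (simp add: power_int_diff power_int_minus field_simps)
  have e3: "q powi (H+1) = q powi H * q" using assms by (simp add: power_int_add)
  have e4: "t powi (V-1) = t powi V * inverse t" using assms by (simp add: power_int_diff field_simps)
  have e5: "q powi (-1-2*H) = inverse q * inverse (q powi H) * inverse (q powi H)" using assms
    by (simp add: power_int_diff power_int_minus power_int_mult field_simps power2_eq_square)
  have e6: "t powi (1-2*V) = t * inverse (t powi V) * inverse (t powi V)" using assms
    by (simp add: power_int_diff power_int_minus power_int_mult field_simps power2_eq_square)
  have nz: "q powi H \<noteq> 0" "t powi V \<noteq> 0" using assms by auto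
  show ?thesis unfolding e1 e2 e3 e4 e5 e6 using assms nz
    by (simp add: power_int_minus field_simps)
qed




lemma prod_flip: "(\<Prod>i\<in>I. b i / a i) = inverse (\<Prod>i\<in>I. a i / (b i :: 'a::field))"
  using prod_inversef[of "\<lambda>i. a i / b i" I] by (simp add: comp_def)

lemma alpha_gal: "alpha q t rho kap = gal (\<lambda>a l. br q t (int a) (int l + 1)) (\<lambda>a l. br q t (int a + 1) (int l)) rho kap"
  by (simp add: alpha_def gal_def)
lemma alphabar_gal: "alphabar q t rho kap = gal (\<lambda>a l. br q t (int a + 1) (int l)) (\<lambda>a l. br q t (int a) (int l + 1)) rho kap"
  by (simp add: alphabar_def gal_def)

locale setting = ptn lam for lam +
  fixes q t :: "'a::field"
  assumes qnz: "q \<noteq> 0" and tnz: "t \<noteq> 0"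
    and generic: "\<forall>a b :: int. q powi a * t powi b = 1 \<longrightarrow> a = 0 \<and> b = 0"
begin

lemma br_nz: "i \<noteq> 0 \<or> j \<noteq> 0 \<Longrightarrow> br q t i j \<noteq> 0"
  using generic by (auto simp: br_def)

definition "Fa = (\<lambda>a l. br q t (int a) (int l + 1))"
definition "Ga = (\<lambda>a l. br q t (int a + 1) (int l))"

lemma FaNZ: "Fa a l \<noteq> 0" unfolding Fa_def by (rule br_nz) simp
lemma GaNZ: "Ga a l \<noteq> 0" unfolding Ga_def by (rule br_nz) simp

lemma al: "alpha q t rho kap = gal Fa Ga rho kap" by (simp add: alpha_gal Fa_def Ga_def)
lemma alb: "alphabar q t rho kap = gal Ga Fa rho kap" by (simp add: alphabar_gal Fa_def Ga_def)

lemma alpha_formula: "s \<le> d \<Longrightarrow> alpha_s q t lam s =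
        (\<Prod>i=1..s. br q t (hsi lam i s) (vsi lam (i + 1) s) / br q t (hsi lam i s) (vsi lam i s)) *
        (\<Prod>i=s+1..nd lam. br q t (hsi lam (s + 1) (i - 1)) (vsi lam (s + 1) i)
                            / br q t (hsi lam (s + 1) i) (vsi lam (s + 1) i))"
proof -
  assume s: "s \<le> d"
  have 1: "(\<Prod>i=s+1..d. Fa (hs lam (s+1) (i-1)) (vs lam (s+1) i - 1) / Fa (hs lam (s+1) i) (vs lam (s+1) i - 1))
    = (\<Prod>i=s+1..nd lam. br q t (hsi lam (s + 1) (i - 1)) (vsi lam (s + 1) i) / br q t (hsi lam (s + 1) i) (vsi lam (s + 1) i))"
  proof (rule prod.cong[OF refl])
    fix i assume i: "i \<in> {s+1..d}"
    then have "1 \<le> vs lam (s+1) i" using vs_pos by auto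
    then show "Fa (hs lam (s+1) (i-1)) (vs lam (s+1) i - 1) / Fa (hs lam (s+1) i) (vs lam (s+1) i - 1)
      = br q t (hsi lam (s + 1) (i - 1)) (vsi lam (s + 1) i) / br q t (hsi lam (s + 1) i) (vsi lam (s + 1) i)"
      by (simp add: Fa_def hsi_def vsi_def of_nat_diff)
  qed
  have 2: "(\<Prod>i=1..s. Ga (hs lam i s - 1) (vs lam (i+1) s) / Ga (hs lam i s - 1) (vs lam i s))
    = (\<Prod>i=1..s. br q t (hsi lam i s) (vsi lam (i + 1) s) / br q t (hsi lam i s) (vsi lam i s))"
  proof (rule prod.cong[OF refl])
    fix i assume i: "i \<in> {1..s}"
    then have "1 \<le> hs lam i s" using hs_pos s by auto
    then show "Ga (hs lam i s - 1) (vs lam (i+1) s) / Ga (hs lam i s - 1) (vs lam i s)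
      = br q t (hsi lam i s) (vsi lam (i + 1) s) / br q t (hsi lam i s) (vsi lam i s)"
      by (simp add: Ga_def hsi_def vsi_def of_nat_diff)
  qed
  show ?thesis unfolding alpha_s_def al gal_plus[OF FaNZ GaNZ s] 1 2 by (simp add: mult.commute)
qed

lemma alphabar_formula: "s \<le> d \<Longrightarrow> alphabar_s q t lam s =
        (\<Prod>i=1..s. brm q t (hsi lam i s) (vsi lam (i + 1) s) / brm q t (hsi lam i s) (vsi lam i s)) *
        (\<Prod>i=s+1..nd lam. brp q t (hsi lam (s + 1) (i - 1)) (vsi lam (s + 1) i)
                            / brp q t (hsi lam (s + 1) i) (vsi lam (s + 1) i))"
proof -
  assume s: "s \<le> d"
  have 1: "(\<Prod>i=s+1..d. Ga (hs lam (s+1) (i-1)) (vs lam (s+1) i - 1) / Ga (hs lam (s+1) i) (vs lam (s+1) i - 1))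
    = (\<Prod>i=s+1..nd lam. brp q t (hsi lam (s + 1) (i - 1)) (vsi lam (s + 1) i) / brp q t (hsi lam (s + 1) i) (vsi lam (s + 1) i))"
  proof (rule prod.cong[OF refl])
    fix i assume i: "i \<in> {s+1..d}"
    then have "1 \<le> vs lam (s+1) i" using vs_pos by auto
    then show "Ga (hs lam (s+1) (i-1)) (vs lam (s+1) i - 1) / Ga (hs lam (s+1) i) (vs lam (s+1) i - 1)
      = brp q t (hsi lam (s + 1) (i - 1)) (vsi lam (s + 1) i) / brp q t (hsi lam (s + 1) i) (vsi lam (s + 1) i)"
      by (simp add: Ga_def brp_def hsi_def vsi_def of_nat_diff)
  qed
  have 2: "(\<Prod>i=1..s. Fa (hs lam i s - 1) (vs lam (i+1) s) / Fa (hs lam i s - 1) (vs lam i s))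
    = (\<Prod>i=1..s. brm q t (hsi lam i s) (vsi lam (i + 1) s) / brm q t (hsi lam i s) (vsi lam i s))"
  proof (rule prod.cong[OF refl])
    fix i assume i: "i \<in> {1..s}"
    then have "1 \<le> hs lam i s" using hs_pos s by auto
    then show "Fa (hs lam i s - 1) (vs lam (i+1) s) / Fa (hs lam i s - 1) (vs lam i s)
      = brm q t (hsi lam i s) (vsi lam (i + 1) s) / brm q t (hsi lam i s) (vsi lam i s)"
      by (simp add: Fa_def brm_def hsi_def vsi_def of_nat_diff)
  qed
  show ?thesis unfolding alphabar_s_def alb gal_plus[OF GaNZ FaNZ s] 1 2 by (simp add: mult.commute)
qed


lemma hh_pos: "1 \<le> r \<Longrightarrow> r \<le> d \<Longrightarrow> 1 \<le> hh lam r"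
  using uu_strict[of r "Suc r"] by (simp add: hh_def)

lemma beta_formula: "1 \<le> r \<Longrightarrow> r \<le> d \<Longrightarrow> beta_r q t lam r =
        (\<Prod>i=1..r-1. brp q t (hsi lam i (r - 1)) (vsi lam i r) / brp q t (hsi lam i (r - 1)) (vsi lam (i + 1) r)) *
        (brp q t 0 (vsi lam r r) / brp q t 0 1) * (brm q t (hhi lam r) 0 / brm q t 1 0) *
        (\<Prod>i=r+1..nd lam. brm q t (hsi lam r i) (vsi lam (r + 1) i) / brm q t (hsi lam r (i - 1)) (vsi lam (r + 1) i))"
proof -
  assume r: "1 \<le> r" "r \<le> d"
  have A: "(\<Prod>i=r+1..d. Fa (hs lam r (i-1) - 1) (vs lam (r+1) i) / Fa (hs lam r i - 1) (vs lam (r+1) i))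
    = inverse (\<Prod>i=r+1..nd lam. brm q t (hsi lam r i) (vsi lam (r + 1) i) / brm q t (hsi lam r (i - 1)) (vsi lam (r + 1) i))"
    unfolding prod_flip[symmetric]
  proof (rule prod.cong[OF refl])
    fix i assume i: "i \<in> {r+1..d}"
    then have "1 \<le> hs lam r (i-1)" "1 \<le> hs lam r i" using hs_pos r by auto
    then show "Fa (hs lam r (i-1) - 1) (vs lam (r+1) i) / Fa (hs lam r i - 1) (vs lam (r+1) i)
      = brm q t (hsi lam r (i - 1)) (vsi lam (r + 1) i) / brm q t (hsi lam r i) (vsi lam (r + 1) i)"
      by (simp add: Fa_def brm_def hsi_def vsi_def of_nat_diff)
  qed
  have B: "Fa 0 0 / Fa (hh lam r - 1) 0 = inverse (brm q t (hhi lam r) 0 / brm q t 1 0)"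
    using hh_pos[OF r] by (simp add: Fa_def brm_def hhi_def of_nat_diff)
  have C: "(\<Prod>i=1..r-1. Ga (hs lam i (r-1)) (vs lam (i+1) r - 1) / Ga (hs lam i (r-1)) (vs lam i r - 1))
    = inverse (\<Prod>i=1..r-1. brp q t (hsi lam i (r - 1)) (vsi lam i r) / brp q t (hsi lam i (r - 1)) (vsi lam (i + 1) r))"
    unfolding prod_flip[symmetric]
  proof (rule prod.cong[OF refl])
    fix i assume i: "i \<in> {1..r-1}"
    then have "1 \<le> vs lam (i+1) r" "1 \<le> vs lam i r" using vs_pos r by auto
    then show "Ga (hs lam i (r-1)) (vs lam (i+1) r - 1) / Ga (hs lam i (r-1)) (vs lam i r - 1)
      = brp q t (hsi lam i (r - 1)) (vsi lam (i + 1) r) / brp q t (hsi lam i (r - 1)) (vsi lam i r)"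
      by (simp add: Ga_def brp_def hsi_def vsi_def of_nat_diff)
  qed
  have D: "Ga 0 0 / Ga 0 (vs lam r r - 1) = inverse (brp q t 0 (vsi lam r r) / brp q t 0 1)"
    using vs_pos[of r r] r by (simp add: Ga_def brp_def vsi_def of_nat_diff)
  show ?thesis unfolding beta_r_def beta_def al gal_minus[OF FaNZ GaNZ r] A B C D
    by (simp add: inverse_mult_distrib divide_inverse mult_ac)
qed

lemma betabar_formula: "1 \<le> r \<Longrightarrow> r \<le> d \<Longrightarrow> betabar_r q t lam r =
        (\<Prod>i=1..r-1. br q t (hsi lam i (r - 1)) (vsi lam i r) / br q t (hsi lam i (r - 1)) (vsi lam (i + 1) r)) *
        (br q t 0 (vsi lam r r) / br q t 0 1) * (br q t (hhi lam r) 0 / br q t 1 0) *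
        (\<Prod>i=r+1..nd lam. br q t (hsi lam r i) (vsi lam (r + 1) i) / br q t (hsi lam r (i - 1)) (vsi lam (r + 1) i))"
proof -
  assume r: "1 \<le> r" "r \<le> d"
  have A: "(\<Prod>i=r+1..d. Ga (hs lam r (i-1) - 1) (vs lam (r+1) i) / Ga (hs lam r i - 1) (vs lam (r+1) i))
    = inverse (\<Prod>i=r+1..nd lam. br q t (hsi lam r i) (vsi lam (r + 1) i) / br q t (hsi lam r (i - 1)) (vsi lam (r + 1) i))"
    unfolding prod_flip[symmetric]
  proof (rule prod.cong[OF refl])
    fix i assume i: "i \<in> {r+1..d}"
    then have "1 \<le> hs lam r (i-1)" "1 \<le> hs lam r i" using hs_pos r by auto
    then show "Ga (hs lam r (i-1) - 1) (vs lam (r+1) i) / Ga (hs lam r i - 1) (vs lam (r+1) i)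
      = br q t (hsi lam r (i - 1)) (vsi lam (r + 1) i) / br q t (hsi lam r i) (vsi lam (r + 1) i)"
      by (simp add: Ga_def hsi_def vsi_def of_nat_diff)
  qed
  have B: "Ga 0 0 / Ga (hh lam r - 1) 0 = inverse (br q t (hhi lam r) 0 / br q t 1 0)"
    using hh_pos[OF r] by (simp add: Ga_def hhi_def of_nat_diff)
  have C: "(\<Prod>i=1..r-1. Fa (hs lam i (r-1)) (vs lam (i+1) r - 1) / Fa (hs lam i (r-1)) (vs lam i r - 1))
    = inverse (\<Prod>i=1..r-1. br q t (hsi lam i (r - 1)) (vsi lam i r) / br q t (hsi lam i (r - 1)) (vsi lam (i + 1) r))"
    unfolding prod_flip[symmetric]
  proof (rule prod.cong[OF refl])
    fix i assume i: "i \<in> {1..r-1}"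
    then have "1 \<le> vs lam (i+1) r" "1 \<le> vs lam i r" using vs_pos r by auto
    then show "Fa (hs lam i (r-1)) (vs lam (i+1) r - 1) / Fa (hs lam i (r-1)) (vs lam i r - 1)
      = br q t (hsi lam i (r - 1)) (vsi lam (i + 1) r) / br q t (hsi lam i (r - 1)) (vsi lam i r)"
      by (simp add: Fa_def hsi_def vsi_def of_nat_diff)
  qed
  have D: "Fa 0 0 / Fa 0 (vs lam r r - 1) = inverse (br q t 0 (vsi lam r r) / br q t 0 1)"
    using vs_pos[of r r] r by (simp add: Fa_def vsi_def of_nat_diff)
  show ?thesis unfolding betabar_r_def betabar_def alb gal_minus[OF GaNZ FaNZ r] A B C D
    by (simp add: inverse_mult_distrib divide_inverse mult_ac)
qed


lemma gamma_formula: "1 \<le> r \<Longrightarrow> r \<le> d \<Longrightarrow> s \<le> d \<Longrightarrow>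
      gamma_rs q t lam r s =
        (if r \<le> s then gammap q t lam r s
         else gammap q t lam r s * q powi (-1 - 2 * (hsi lam (s + 1) (r - 1)))
                * t powi (1 - 2 * (vsi lam (s + 1) r)))"
proof -
  assume r: "1 \<le> r" "r \<le> d" and s: "s \<le> d"
  have g: "gamma_rs q t lam r s = (1 - q powi (int (U r) - 1 - int (U (s+1))) * t powi (int (W s) - int (W r) + 1)) *
     (1 - q powi (int (U r) - 1 - int (U (s+1)) + 1) * t powi (int (W s) - int (W r) + 1 - 1)) / ((1 - q) * (1 - t))"
    unfolding gamma_rs_def gamma_def gAB[OF r s] ..
  show ?thesis
  proof (cases "r \<le> s")
    case True
    have h: "hsi lam r s = int (U r) - int (U (s+1))" using hs_eq[of r s] uu_strict[of r "s+1"] r s True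
      by (simp add: hsi_def of_nat_diff)
    have v: "vsi lam (r+1) s = int (W s) - int (W r)" using vs_eq[of "r+1" s] W_mono[of r s] r s True
      by (simp add: vsi_def of_nat_diff)
    show ?thesis using True r unfolding g gammap_def h v
      by (simp add: br_def brm_def algebra_simps)
  next
    case False
    define H where "H = hsi lam (s+1) (r-1)"
    define V where "V = vsi lam (s+1) r"
    have "U r \<le> U (s+1)" using uu_le_iff[of r "s+1"] r s False by auto
    then have h: "int (U r) - 1 - int (U (s+1)) = -H - 1" using hs_eq[of "s+1" "r-1"] r s False
      by (simp add: H_def hsi_def of_nat_diff)
    have v: "int (W s) - int (W r) + 1 = 1 - V" using vs_eq[of "s+1" r] W_mono[of s r] r s False
      by (simp add: V_def vsi_def of_nat_diff)
    have gp: "gammap q t lam r s = (1 - q powi H * t powi V) * (1 - q powi (H+1) * t powi (V-1)) / ((1 - t) * (1 - q))"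
      using False unfolding gammap_def H_def V_def by (simp add: br_def brp_def)
    have "gamma_rs q t lam r s = (1 - q powi (-H-1) * t powi (1-V)) * (1 - q powi (-H) * t powi (-V)) / ((1 - q) * (1 - t))"
      unfolding g h v by simp
    also have "\<dots> = (1 - q powi H * t powi V) * (1 - q powi (H+1) * t powi (V-1)) * (q powi (-1-2*H) * t powi (1-2*V)) / ((1 - q) * (1 - t))"
      using gamma_alg[OF qnz tnz, of H V] by simp
    also have "\<dots> = gammap q t lam r s * q powi (-1-2*H) * t powi (1-2*V)"
      unfolding gp by (simp add: field_simps)
    finally show ?thesis using False by (simp add: H_def V_def)
  qed
qed

lemma p_formula: "r \<le> d \<Longrightarrow> s \<le> d \<Longrightarrow>
      p_rs q t lam r s =
        (if r = 0 then t powi (vsi lam 1 s) * alpha_s q t lam s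
         else tau q t lam r s * (alpha_s q t lam s * beta_r q t lam r) / gammap q t lam r s)
    \<and> pbar_rs q t lam r s =
        (if r = 0 then t powi (vsi lam 1 s) * alphabar_s q t lam s
         else tau q t lam r s * (alphabar_s q t lam s * betabar_r q t lam r) / gammap q t lam r s)"
proof -
  assume r: "r \<le> d" and s: "s \<le> d"
  show ?thesis
  proof (cases "r = 0")
    case True
    then show ?thesis using nn_plus[OF s]
      by (simp add: p_rs_def pbar_rs_def Pup0_def Pbar0_def alpha_s_def alphabar_s_def vsi_def)
  next
    case False
    then have r1: "1 \<le> r" by simp
    have gB: "gB (lplus lam s) lam (lminus lam r) - 1 = int (W s) - int (W r)" using gAB(2)[OF r1 r s] by simp
    have gam: "gamma q t (lplus lam s) lam (lminus lam r) = gamma_rs q t lam r s" by (simp add: gamma_rs_def)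
    show ?thesis
    proof (cases "r \<le> s")
      case True
      have v: "vsi lam (r+1) s = int (W s) - int (W r)" using vs_eq[of "r+1" s] W_mono[of r s] r1 s True
        by (simp add: vsi_def of_nat_diff)
      have t: "tau q t lam r s = t powi (int (W s) - int (W r))" using True r1 unfolding tau_def v by simp
      show ?thesis using False True unfolding p_rs_def pbar_rs_def Pup_def Pbar_def gB gam gamma_formula[OF r1 r s] t
        by (simp add: alpha_s_def alphabar_s_def beta_r_def betabar_r_def mult.assoc)
    next
      case nrs: False
      define H where "H = hsi lam (s+1) (r-1)"
      define V where "V = vsi lam (s+1) r"
      define K where "K = q powi (-1-2*H) * t powi (1-2*V)"
      define c where "c = q powi (1+2*H) * t powi (-1+V)"
      have v: "int (W s) - int (W r) = - V" using vs_eq[of "s+1" r] W_mono[of s r] r s nrs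
        by (simp add: V_def vsi_def of_nat_diff)
      have Knz: "K \<noteq> 0" using qnz tnz by (simp add: K_def)
      have tc: "t powi (-V) = c * K"
      proof -
        have "c * K = (q powi (1+2*H) * q powi (-1-2*H)) * (t powi (-1+V) * t powi (1-2*V))"
          by (simp add: c_def K_def mult_ac)
        also have "\<dots> = t powi (-V)" using qnz tnz by (simp add: power_int_add[symmetric])
        finally show ?thesis by simp
      qed
      have t: "tau q t lam r s = c" using nrs by (simp add: tau_def c_def H_def V_def)
      have gg: "gamma_rs q t lam r s = gammap q t lam r s * K"
        using gamma_formula[OF r1 r s] nrs by (simp add: K_def H_def V_def mult.assoc)
      have key: "\<And>a b g :: 'a. t powi (-V) * a * b / (g * K) = c * (a * b) / g"
        unfolding tc using Knz by (simp add: divide_inverse inverse_mult_distrib mult_ac)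
      show ?thesis using False unfolding p_rs_def pbar_rs_def Pup_def Pbar_def gB gam gg t v
        by (simp add: key alpha_s_def alphabar_s_def beta_r_def betabar_r_def)
    qed
  qed
qed

end


theorem proposition4p17:
  fixes q t :: "'a::field" and lam :: "nat list"
  assumes "is_partition lam"
    and "q \<noteq> 0" and "t \<noteq> 0"
    and generic: "\<forall>a b :: int. q powi a * t powi b = 1 \<longrightarrow> a = 0 \<and> b = 0"
  shows
   "(\<forall>s \<in> {0..nd lam}.
      alpha_s q t lam s =
        (\<Prod>i=1..s. br q t (hsi lam i s) (vsi lam (i + 1) s) / br q t (hsi lam i s) (vsi lam i s)) *
        (\<Prod>i=s+1..nd lam. br q t (hsi lam (s + 1) (i - 1)) (vsi lam (s + 1) i)
                            / br q t (hsi lam (s + 1) i) (vsi lam (s + 1) i))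
    \<and> alphabar_s q t lam s =
        (\<Prod>i=1..s. brm q t (hsi lam i s) (vsi lam (i + 1) s) / brm q t (hsi lam i s) (vsi lam i s)) *
        (\<Prod>i=s+1..nd lam. brp q t (hsi lam (s + 1) (i - 1)) (vsi lam (s + 1) i)
                            / brp q t (hsi lam (s + 1) i) (vsi lam (s + 1) i)))
  \<and> (\<forall>r \<in> {1..nd lam}.
      beta_r q t lam r =
        (\<Prod>i=1..r-1. brp q t (hsi lam i (r - 1)) (vsi lam i r) / brp q t (hsi lam i (r - 1)) (vsi lam (i + 1) r)) *
        (brp q t 0 (vsi lam r r) / brp q t 0 1) * (brm q t (hhi lam r) 0 / brm q t 1 0) *
        (\<Prod>i=r+1..nd lam. brm q t (hsi lam r i) (vsi lam (r + 1) i) / brm q t (hsi lam r (i - 1)) (vsi lam (r + 1) i))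
    \<and> betabar_r q t lam r =
        (\<Prod>i=1..r-1. br q t (hsi lam i (r - 1)) (vsi lam i r) / br q t (hsi lam i (r - 1)) (vsi lam (i + 1) r)) *
        (br q t 0 (vsi lam r r) / br q t 0 1) * (br q t (hhi lam r) 0 / br q t 1 0) *
        (\<Prod>i=r+1..nd lam. br q t (hsi lam r i) (vsi lam (r + 1) i) / br q t (hsi lam r (i - 1)) (vsi lam (r + 1) i)))
  \<and> (\<forall>r \<in> {1..nd lam}. \<forall>s \<in> {0..nd lam}.
      gamma_rs q t lam r s =
        (if r \<le> s then gammap q t lam r s
         else gammap q t lam r s * q powi (-1 - 2 * (hsi lam (s + 1) (r - 1)))
                * t powi (1 - 2 * (vsi lam (s + 1) r))))
  \<and> (\<forall>r \<in> {0..nd lam}. \<forall>s \<in> {0..nd lam}.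
      p_rs q t lam r s =
        (if r = 0 then t powi (vsi lam 1 s) * alpha_s q t lam s
         else tau q t lam r s * (alpha_s q t lam s * beta_r q t lam r) / gammap q t lam r s)
    \<and> pbar_rs q t lam r s =
        (if r = 0 then t powi (vsi lam 1 s) * alphabar_s q t lam s
         else tau q t lam r s * (alphabar_s q t lam s * betabar_r q t lam r) / gammap q t lam r s))"
proof -
  interpret setting lam q t by unfold_locales (use assms in auto)
  show ?thesis
    apply (intro conjI ballI)
    using alpha_formula alphabar_formula beta_formula betabar_formula gamma_formula p_formula by auto
qed

end
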